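(* Let $N\ge 2$ be an integer and $\kappa,m>0$. For every fixed $k_1\in\mathbb{Z}\cap(0,N)$, $$\sum_{\substack{k_2,k_3,k_4\in\mathbb{Z}\cap(0,N)\\ k_1-k_2+k_3+k_4\equiv 0\ (\mathrm{mod}\ N)}}\big|A^{(2)}_{1,2,3,4}\big|^2\le C\,N^2\log N,$$ with $C>0$ depending only on $\kappa,m$.
   Context: For an integer $N\ge 2$ and constants $\kappa,m>0$, define for $k\in\mathbb{Z}$ the frequency $\omega_k=2\sqrt{\kappa/m}\,\big|\sin(\pi k/N)\big|$ and the $2N$-periodic sign function $\iota(x)=\operatorname{sgn}\sin(\pi x/N)$. For integers $k_1,k_2,k_3,k_4$ set $$T_{1,-2,3,4}=-\frac{3}{4\kappa^2}\,\iota(-k_2+k_3+k_4)\,\iota(-k_2)\,\iota(k_3)\,\iota(k_4)\prod_{i=1}^4\sqrt{\omega_{k_i}},\qquad A^{(2)}_{1,2,3,4}=-\frac{T_{1,-2,3,4}}{\omega_{k_1}-\omega_{k_2}+\omega_{k_3}+\omega_{k_4}}.$$ On the summation range (all $k_i\in\mathbb{Z}\cap(0,N)$, $k_1-k_2+k_3+k_4\equiv 0$ mod $N$) the denominator does not vanish. *)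

theory Defs
  imports Complex_Main
begin

definition omega :: "real \<Rightarrow> real \<Rightarrow> nat \<Rightarrow> int \<Rightarrow> real" where
  "omega \<kappa> m N k = 2 * sqrt (\<kappa> / m) * \<bar>sin (pi * real_of_int k / real N)\<bar>"

definition iota :: "nat \<Rightarrow> int \<Rightarrow> real" where
  "iota N x = sgn (sin (pi * real_of_int x / real N))"

definition Tcoef :: "real \<Rightarrow> real \<Rightarrow> nat \<Rightarrow> int \<Rightarrow> int \<Rightarrow> int \<Rightarrow> int \<Rightarrow> real" where
  "Tcoef \<kappa> m N k1 k2 k3 k4 =
     - (3 / (4 * \<kappa>\<^sup>2)) * iota N (- k2 + k3 + k4) * iota N (- k2) * iota N k3 * iota N k4
     * (sqrt (omega \<kappa> m N k1) * sqrt (omega \<kappa> m N k2) * sqrt (omega \<kappa> m N k3)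
        * sqrt (omega \<kappa> m N k4))"

definition A2 :: "real \<Rightarrow> real \<Rightarrow> nat \<Rightarrow> int \<Rightarrow> int \<Rightarrow> int \<Rightarrow> int \<Rightarrow> real" where
  "A2 \<kappa> m N k1 k2 k3 k4 =
     - Tcoef \<kappa> m N k1 k2 k3 k4
     / (omega \<kappa> m N k1 - omega \<kappa> m N k2 + omega \<kappa> m N k3 + omega \<kappa> m N k4)"

definition sum_range :: "nat \<Rightarrow> int \<Rightarrow> (int \<times> int \<times> int) set" where
  "sum_range N k1 = {(k2, k3, k4). 0 < k2 \<and> k2 < int N \<and> 0 < k3 \<and> k3 < int N
      \<and> 0 < k4 \<and> k4 < int N \<and> int N dvd (k1 - k2 + k3 + k4)}"

end

theory Submission
  imports Defs
begin



lemma one_minus_abs_cos: "(sin (y::real))^2 / 2 \<le> 1 - \<bar>cos y\<bar>"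
proof -
  have "(sin y)^2 = 1 - (cos y)^2" using sin_cos_squared_add[of y] by linarith
  moreover have "\<bar>cos y\<bar> \<le> 1" by simp
  moreover have "(cos y)^2 = \<bar>cos y\<bar>^2" by simp
  moreover have "(1 - \<bar>cos y\<bar>)^2 = 1 - 2 * \<bar>cos y\<bar> + (cos y)^2" by (simp add: power2_diff)
  moreover have "0 \<le> (1 - \<bar>cos y\<bar>)^2" by simp
  ultimately show ?thesis by linarith
qed

lemma abs_sin_add_le: fixes x y :: real shows "\<bar>sin (x + y)\<bar> \<le> \<bar>sin x\<bar> * \<bar>cos y\<bar> + \<bar>cos x\<bar> * \<bar>sin y\<bar>"
  unfolding sin_add by (metis abs_mult abs_triangle_ineq)

lemma abs_sin_add_le2: fixes x y :: real shows "\<bar>sin (x + y)\<bar> \<le> \<bar>sin x\<bar> + \<bar>sin y\<bar>"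
proof -
  have "\<bar>sin x\<bar> * \<bar>cos y\<bar> \<le> \<bar>sin x\<bar>" using mult_left_mono[OF abs_cos_le_one[of y], of "\<bar>sin x\<bar>"] by simp
  moreover have "\<bar>cos x\<bar> * \<bar>sin y\<bar> \<le> \<bar>sin y\<bar>" using mult_right_mono[OF abs_cos_le_one[of x], of "\<bar>sin y\<bar>"] by simp
  ultimately show ?thesis using abs_sin_add_le[of x y] by linarith
qed

lemma pair_bound:
  fixes x y z :: real
  shows "\<bar>sin x\<bar> * \<bar>sin y\<bar> * (\<bar>sin x\<bar> + \<bar>sin y\<bar>) / 2
     \<le> \<bar>sin x\<bar> + \<bar>sin y\<bar> + \<bar>sin z\<bar> - \<bar>sin (x + y + z)\<bar>"
proof -
  have 1: "\<bar>sin (x + y + z)\<bar> \<le> \<bar>sin (x + y)\<bar> + \<bar>sin z\<bar>" by (rule abs_sin_add_le2)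
  have 2: "\<bar>sin (x + y)\<bar> \<le> \<bar>sin x\<bar> * \<bar>cos y\<bar> + \<bar>sin y\<bar> * \<bar>cos x\<bar>" using abs_sin_add_le[of x y] by (simp add: mult.commute)
  have 3: "\<bar>sin x\<bar> * ((sin y)^2 / 2) \<le> \<bar>sin x\<bar> - \<bar>sin x\<bar> * \<bar>cos y\<bar>"
    using mult_left_mono[OF one_minus_abs_cos[of y], of "\<bar>sin x\<bar>"] by (simp add: right_diff_distrib)
  have 4: "\<bar>sin y\<bar> * ((sin x)^2 / 2) \<le> \<bar>sin y\<bar> - \<bar>sin y\<bar> * \<bar>cos x\<bar>"
    using mult_left_mono[OF one_minus_abs_cos[of x], of "\<bar>sin y\<bar>"] by (simp add: right_diff_distrib)
  have 5: "\<bar>sin x\<bar> * \<bar>sin y\<bar> * (\<bar>sin x\<bar> + \<bar>sin y\<bar>) / 2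
     = \<bar>sin x\<bar> * ((sin y)^2 / 2) + \<bar>sin y\<bar> * ((sin x)^2 / 2)"
    by (simp add: power2_eq_square algebra_simps)
  show ?thesis using 1 2 3 4 5 by linarith
qed

lemma core:
  fixes a b c :: real
  defines "s1 \<equiv> \<bar>sin a\<bar>" and "s3 \<equiv> \<bar>sin b\<bar>" and "s4 \<equiv> \<bar>sin c\<bar>"
    and "s2 \<equiv> \<bar>sin (a + b + c)\<bar>"
  shows "s1 * s2 * s3 * s4 * s3^2 \<le> 4 * (s1 - s2 + s3 + s4)^2"
proof -
  let ?D = "s1 - s2 + s3 + s4"
  have d1: "s1 * s3 * (s1 + s3) / 2 \<le> ?D"
    using pair_bound[of a b c] unfolding s1_def s2_def s3_def s4_def by simp
  have d2: "s3 * s4 * (s3 + s4) / 2 \<le> ?D"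
    using pair_bound[of b c a] unfolding s1_def s2_def s3_def s4_def by (simp add: add_ac)
  have s2le: "s2 \<le> s1 + s3 + s4"
    using abs_sin_add_le2[of "a+b" c] abs_sin_add_le2[of a b] unfolding s1_def s2_def s3_def s4_def by simp
  have p: "0 \<le> s1" "0 \<le> s2" "0 \<le> s3" "0 \<le> s4" unfolding s1_def s2_def s3_def s4_def by simp_all
  have q1: "0 \<le> s3 * s4 * (s3 + s4) / 2" using p by simp
  have q2: "0 \<le> s1 * s3 * (s1 + s3) / 2" using p by simp
  have q3: "0 \<le> ?D" using d1 q2 by linarith
  have "(s1 * s3 * (s1 + s3) / 2) * (s3 * s4 * (s3 + s4) / 2) \<le> ?D * ?D"
    by (rule mult_mono[OF d1 d2 q3 q1])
  moreover have "s1 * s2 * s3 * s4 * s3^2 \<le> 4 * ((s1 * s3 * (s1 + s3) / 2) * (s3 * s4 * (s3 + s4) / 2))"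
  proof -
    have "s3 * s2 \<le> (s1 + s3) * (s3 + s4)"
    proof -
      have "s3 * s2 \<le> s3 * (s1 + s3 + s4)" using s2le p by (simp add: mult_left_mono)
      also have "\<dots> \<le> (s1 + s3) * (s3 + s4)" using p by (simp add: algebra_simps)
      finally show ?thesis .
    qed
    hence "(s1 * s3 * s3 * s4) * (s3 * s2) \<le> (s1 * s3 * s3 * s4) * ((s1 + s3) * (s3 + s4))"
      using p by (intro mult_left_mono) auto
    thus ?thesis by (simp add: power2_eq_square algebra_simps)
  qed
  moreover have "?D^2 = ?D * ?D" by (rule power2_eq_square)
  ultimately show ?thesis by linarith
qed

lemma sin_ge_third: assumes "0 \<le> t" "t \<le> pi/2" shows "t / 3 \<le> sin t"
proof -
  have "\<bar>sin t - (\<Sum>m<3. sin_coeff m * t ^ m)\<bar> \<le> inverse (fact 3) * \<bar>t\<bar> ^ 3"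
    by (rule Maclaurin_sin_bound)
  moreover have "(\<Sum>m<3. sin_coeff m * t ^ m) = t"
    by (simp add: eval_nat_numeral sin_coeff_def)
  ultimately have "t - t^3/6 \<le> sin t" using assms by (simp add: fact_numeral abs_if split: if_splits)
  moreover have "t^2 \<le> 4"
  proof -
    have "t \<le> 2" using assms pi_less_4 by linarith
    hence "t^2 \<le> 2^2" by (rule power_mono) (use assms in simp)
    thus ?thesis by simp
  qed
  hence "t * t^2 \<le> t * 4" using assms by (intro mult_left_mono) auto
  ultimately show ?thesis by (simp add: power2_eq_square power3_eq_cube)
qed



lemma harm_bound: assumes "1 \<le> n" shows "(\<Sum>k\<in>{1..n}. 1 / real k) \<le> 1 + ln (real n)"
  using assms
proof (induction n rule: nat_induct_at_least)
  case base then show ?case by simp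
next
  case (Suc n)
  have np: "0 < real n" using Suc.hyps by simp
  have "ln (real n / real (Suc n)) \<le> real n / real (Suc n) - 1"
    by (rule ln_le_minus_one) (use np in simp)
  moreover have "ln (real n / real (Suc n)) = ln (real n) - ln (real (Suc n))"
    using np by (simp add: ln_div)
  moreover have "real n / real (Suc n) - 1 = - (1 / real (Suc n))"
    by (simp add: field_simps)
  ultimately have "1 / real (Suc n) \<le> ln (real (Suc n)) - ln (real n)" by linarith
  moreover have "(\<Sum>k\<in>{1..Suc n}. 1 / real k) = (\<Sum>k\<in>{1..n}. 1 / real k) + 1 / real (Suc n)"
    by simp
  ultimately show ?case using Suc.IH by linarith
qed

lemma layer: "(\<Sum>i\<in>{1..n}. \<Sum>j\<in>{1..n}. 1 / (real (max i j))^2) \<le> 2 * (\<Sum>k\<in>{1..n}. 1 / real k)"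
proof (induction n)
  case 0 then show ?case by simp
next
  case (Suc n)
  let ?f = "\<lambda>i j. 1 / (real (max i j))^2"
  have a: "(\<Sum>i\<in>{1..n}. ?f i (Suc n)) = real n / (real (Suc n))^2"
  proof -
    have "(\<Sum>i\<in>{1..n}. ?f i (Suc n)) = (\<Sum>i\<in>{1..n}. 1 / (real (Suc n))^2)"
      by (rule sum.cong) (auto simp: max_def)
    thus ?thesis by simp
  qed
  have b: "(\<Sum>j\<in>{1..Suc n}. ?f (Suc n) j) = real (Suc n) / (real (Suc n))^2"
  proof -
    have "(\<Sum>j\<in>{1..Suc n}. ?f (Suc n) j) = (\<Sum>j\<in>{1..Suc n}. 1 / (real (Suc n))^2)"
      by (rule sum.cong) (auto simp: max_def)
    thus ?thesis by simp
  qed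
  have "(\<Sum>i\<in>{1..Suc n}. \<Sum>j\<in>{1..Suc n}. ?f i j)
      = (\<Sum>i\<in>{1..n}. \<Sum>j\<in>{1..Suc n}. ?f i j) + (\<Sum>j\<in>{1..Suc n}. ?f (Suc n) j)"
    by (rule sum.cl_ivl_Suc[of _ 1 n, THEN trans]) simp
  also have "(\<Sum>i\<in>{1..n}. \<Sum>j\<in>{1..Suc n}. ?f i j) = (\<Sum>i\<in>{1..n}. (\<Sum>j\<in>{1..n}. ?f i j) + ?f i (Suc n))"
    by (rule sum.cong) simp_all
  also have "\<dots> = (\<Sum>i\<in>{1..n}. \<Sum>j\<in>{1..n}. ?f i j) + (\<Sum>i\<in>{1..n}. ?f i (Suc n))"
    by (rule sum.distrib)
  finally have e0: "(\<Sum>i\<in>{1..Suc n}. \<Sum>j\<in>{1..Suc n}. ?f i j)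
      = (\<Sum>i\<in>{1..n}. \<Sum>j\<in>{1..n}. ?f i j) + (\<Sum>i\<in>{1..n}. ?f i (Suc n)) + (\<Sum>j\<in>{1..Suc n}. ?f (Suc n) j)" .
  have e: "(\<Sum>i\<in>{1..Suc n}. \<Sum>j\<in>{1..Suc n}. ?f i j)
      = (\<Sum>i\<in>{1..n}. \<Sum>j\<in>{1..n}. ?f i j) + real n / (real (Suc n))^2 + real (Suc n) / (real (Suc n))^2"
    unfolding e0 a b ..
  have "real n / (real (Suc n))^2 + real (Suc n) / (real (Suc n))^2 \<le> 2 / real (Suc n)"
  proof -
    have "real n / (real (Suc n))^2 \<le> real (Suc n) / (real (Suc n))^2"
      by (rule divide_right_mono) simp_all
    moreover have "real (Suc n) / (real (Suc n))^2 = 1 / real (Suc n)"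
      by (simp only: power2_eq_square) simp
    ultimately show ?thesis by simp
  qed
  moreover have "(\<Sum>k\<in>{1..Suc n}. 1 / real k) = (\<Sum>k\<in>{1..n}. 1 / real k) + 1 / real (Suc n)"
    by simp
  ultimately show ?case using e Suc.IH by linarith
qed

lemma fold_min:
  fixes G :: "nat \<Rightarrow> real"
  assumes nn: "\<And>i. 0 \<le> G i"
  shows "(\<Sum>y\<in>{1..N-1}. G (min y (N - y))) \<le> 2 * (\<Sum>i\<in>{1..N}. G i)"
proof -
  have "(\<Sum>y\<in>{1..N-1}. G (min y (N - y))) \<le> (\<Sum>y\<in>{1..N-1}. G y + G (N - y))"
    by (rule sum_mono) (auto simp: min_def nn add_increasing add_increasing2)
  also have "\<dots> = (\<Sum>y\<in>{1..N-1}. G y) + (\<Sum>y\<in>{1..N-1}. G (N - y))"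
    by (rule sum.distrib)
  also have "(\<Sum>y\<in>{1..N-1}. G (N - y)) = (\<Sum>y\<in>{1..N-1}. G y)"
  proof (cases "N = 0")
    case True then show ?thesis by simp
  next
    case False
    have "(\<Sum>y\<in>{1..N-1}. G y) = (\<Sum>y\<in>{1..N-1}. G (N - 1 + 1 - y))"
      by (rule sum.atLeastAtMost_rev)
    also have "\<dots> = (\<Sum>y\<in>{1..N-1}. G (N - y))" using False by simp
    finally show ?thesis by simp
  qed
  also have "(\<Sum>y\<in>{1..N-1}. G y) \<le> (\<Sum>i\<in>{1..N}. G i)"
    by (rule sum_mono2) (auto simp: nn)
  finally show ?thesis by linarith
qed

lemma double_fold:
  "(\<Sum>y\<in>{1..N-1}. \<Sum>z\<in>{1..N-1}. 1 / (real (max (min y (N - y)) (min z (N - z))))^2)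
     \<le> 8 * (1 + ln (real N))" if "1 \<le> N"
proof -
  let ?f = "\<lambda>i j. 1 / (real (max i j))^2"
  have "(\<Sum>y\<in>{1..N-1}. \<Sum>z\<in>{1..N-1}. ?f (min y (N - y)) (min z (N - z)))
      \<le> (\<Sum>y\<in>{1..N-1}. 2 * (\<Sum>j\<in>{1..N}. ?f (min y (N - y)) j))"
    by (rule sum_mono, rule fold_min) simp
  also have "\<dots> = 2 * (\<Sum>j\<in>{1..N}. \<Sum>y\<in>{1..N-1}. ?f (min y (N - y)) j)"
    by (subst sum.swap) (simp add: sum_distrib_left)
  also have "\<dots> \<le> 2 * (\<Sum>j\<in>{1..N}. 2 * (\<Sum>i\<in>{1..N}. ?f i j))"
    by (intro mult_left_mono sum_mono fold_min) simp_all
  also have "\<dots> = 4 * (\<Sum>i\<in>{1..N}. \<Sum>j\<in>{1..N}. ?f i j)"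
    by (subst sum.swap) (simp add: sum_distrib_left)
  also have "\<dots> \<le> 4 * (2 * (\<Sum>k\<in>{1..N}. 1 / real k))"
    by (intro mult_left_mono layer) simp
  also have "\<dots> \<le> 4 * (2 * (1 + ln (real N)))"
    by (intro mult_left_mono harm_bound that) simp_all
  finally show ?thesis by simp
qed



lemma abs_sin_shift_int: "\<bar>sin (x + of_int j * pi)\<bar> = \<bar>sin x\<bar>"
proof -
  have s0: "sin (of_int j * pi) = 0" using sin_zero_iff_int2 by blast
  have "(cos (of_int j * pi))^2 = 1" using sin_cos_squared_add[of "of_int j * pi"] s0 by simp
  hence c1: "\<bar>cos (of_int j * pi)\<bar> = 1" by (auto simp: power2_eq_1_iff)
  show ?thesis by (simp add: sin_add s0 abs_mult c1)
qed

lemma sin_lower: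
  fixes N :: nat and k :: int
  assumes "0 < k" "k < int N"
  shows "2 * real (min (nat k) (N - nat k)) / (3 * real N) \<le> \<bar>sin (pi * real_of_int k / real N)\<bar>"
proof -
  define y where "y = nat k"
  have ky: "real_of_int k = real y" using assms y_def by simp
  have yN: "y < N" "0 < y" using assms y_def by auto
  have Np: "0 < real N" using yN by simp
  have key: "2 * real i / (3 * real N) \<le> sin (pi * real i / real N)" if "2 * i \<le> N" for i
  proof -
    define v where "v = real i / real N"
    have e1: "pi * real i / real N = pi * v" unfolding v_def by simp
    have e2: "2 * real i / (3 * real N) = 2 * v / 3" unfolding v_def by simp
    have t0: "0 \<le> pi * v" unfolding v_def by simp
    have "pi * v \<le> pi / 2"
      using that Np unfolding v_def by (simp add: field_simps)
    hence "pi * v / 3 \<le> sin (pi * v)" by (rule sin_ge_third[OF t0])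
    moreover have "2 * v \<le> pi * v"
      by (rule mult_right_mono[OF pi_ge_two]) (simp add: v_def)
    ultimately have "2 * v / 3 \<le> sin (pi * v)" by linarith
    thus ?thesis unfolding e1 e2 .
  qed
  have sp: "0 \<le> sin (pi * real y / real N)"
    by (rule sin_ge_zero) (use yN Np in \<open>simp_all add: field_simps\<close>)
  have ab: "\<bar>sin (pi * real_of_int k / real N)\<bar> = sin (pi * real y / real N)"
    using sp ky by simp
  have "2 * real (min y (N - y)) / (3 * real N) \<le> sin (pi * real y / real N)"
  proof (cases "2 * y \<le> N")
    case True
    hence "min y (N - y) = y" by simp
    with key[OF True] show ?thesis by simp
  next
    case False
    hence m: "min y (N - y) = N - y" by simp
    have "2 * (N - y) \<le> N" using False by simp
    note k2 = key[OF this]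
    have "pi * real (N - y) / real N = pi - pi * real y / real N"
      using yN Np by (simp add: of_nat_diff field_simps)
    hence "sin (pi * real (N - y) / real N) = sin (pi * real y / real N)" by simp
    with k2 m show ?thesis by simp
  qed
  thus ?thesis unfolding ab y_def .
qed




lemma ratio_one:
  fixes a b c L :: real
  assumes L: "0 < L" "L \<le> \<bar>sin b\<bar>"
  shows "\<bar>sin a\<bar> * \<bar>sin (a + b + c)\<bar> * \<bar>sin b\<bar> * \<bar>sin c\<bar>
          / (\<bar>sin a\<bar> - \<bar>sin (a + b + c)\<bar> + \<bar>sin b\<bar> + \<bar>sin c\<bar>)^2 \<le> 4 / L^2"
proof -
  define S where "S = \<bar>sin a\<bar> * \<bar>sin (a + b + c)\<bar> * \<bar>sin b\<bar> * \<bar>sin c\<bar>"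
  define D where "D = \<bar>sin a\<bar> - \<bar>sin (a + b + c)\<bar> + \<bar>sin b\<bar> + \<bar>sin c\<bar>"
  define s3 where "s3 = \<bar>sin b\<bar>"
  have c: "S * s3^2 \<le> 4 * D^2" using core[of a b c] unfolding S_def D_def s3_def .
  have s3p: "0 < s3" using L s3_def by simp
  have "S / D^2 \<le> 4 / s3^2"
  proof (cases "D = 0")
    case True then show ?thesis by simp
  next
    case False
    hence "0 < D^2" by simp
    thus ?thesis using c s3p by (simp add: divide_simps mult.commute)
  qed
  also have "4 / s3^2 \<le> 4 / L^2"
    using L s3_def by (intro divide_left_mono power_mono) auto
  finally show ?thesis unfolding S_def D_def .
qed

lemma ratio_both:
  fixes a b c L3 L4 :: real
  assumes "0 < L3" "L3 \<le> \<bar>sin b\<bar>" "0 < L4" "L4 \<le> \<bar>sin c\<bar>"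
  shows "\<bar>sin a\<bar> * \<bar>sin (a + b + c)\<bar> * \<bar>sin b\<bar> * \<bar>sin c\<bar>
          / (\<bar>sin a\<bar> - \<bar>sin (a + b + c)\<bar> + \<bar>sin b\<bar> + \<bar>sin c\<bar>)^2 \<le> 4 / L3^2"
    and "\<bar>sin a\<bar> * \<bar>sin (a + b + c)\<bar> * \<bar>sin b\<bar> * \<bar>sin c\<bar>
          / (\<bar>sin a\<bar> - \<bar>sin (a + b + c)\<bar> + \<bar>sin b\<bar> + \<bar>sin c\<bar>)^2 \<le> 4 / L4^2"
proof -
  show "\<bar>sin a\<bar> * \<bar>sin (a + b + c)\<bar> * \<bar>sin b\<bar> * \<bar>sin c\<bar>
          / (\<bar>sin a\<bar> - \<bar>sin (a + b + c)\<bar> + \<bar>sin b\<bar> + \<bar>sin c\<bar>)^2 \<le> 4 / L3^2"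
    using ratio_one assms by blast
  have "a + c + b = a + b + c" by simp
  have e1: "\<bar>sin a\<bar> * \<bar>sin (a + b + c)\<bar> * \<bar>sin b\<bar> * \<bar>sin c\<bar> = \<bar>sin a\<bar> * \<bar>sin (a + c + b)\<bar> * \<bar>sin c\<bar> * \<bar>sin b\<bar>"
    by (simp add: add_ac mult_ac)
  have e2: "\<bar>sin a\<bar> - \<bar>sin (a + b + c)\<bar> + \<bar>sin b\<bar> + \<bar>sin c\<bar> = \<bar>sin a\<bar> - \<bar>sin (a + c + b)\<bar> + \<bar>sin c\<bar> + \<bar>sin b\<bar>"
    by (simp add: add_ac)
  show "\<bar>sin a\<bar> * \<bar>sin (a + b + c)\<bar> * \<bar>sin b\<bar> * \<bar>sin c\<bar>
          / (\<bar>sin a\<bar> - \<bar>sin (a + b + c)\<bar> + \<bar>sin b\<bar> + \<bar>sin c\<bar>)^2 \<le> 4 / L4^2"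
    unfolding e1 e2 using ratio_one[of L4 c a b] assms by blast
qed

lemma alg:
  fixes \<kappa> c0 s1 s2 s3 s4 i1 i2 i3 i4 :: real
  assumes "0 < \<kappa>" "0 < c0" "0 \<le> s1" "0 \<le> s2" "0 \<le> s3" "0 \<le> s4" "(i1 * i2 * i3 * i4)^2 \<le> 1"
  shows "(- (- (3 / (4 * \<kappa>\<^sup>2)) * i1 * i2 * i3 * i4 * (sqrt (c0 * s1) * sqrt (c0 * s2) * sqrt (c0 * s3) * sqrt (c0 * s4)))
           / (c0 * s1 - c0 * s2 + c0 * s3 + c0 * s4))^2
         \<le> 9 * c0^2 / (16 * \<kappa>^4) * (s1 * s2 * s3 * s4 / (s1 - s2 + s3 + s4)^2)"
proof -
  define I where "I = i1 * i2 * i3 * i4"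
  have II: "I^2 \<le> 1" using assms(7) unfolding I_def .
  have eqI: "\<And>P. - (3 / (4 * \<kappa>\<^sup>2)) * i1 * i2 * i3 * i4 * P = - (3 / (4 * \<kappa>\<^sup>2)) * I * P"
    unfolding I_def by (simp add: mult.assoc)
  define D where "D = s1 - s2 + s3 + s4"
  define S where "S = s1 * s2 * s3 * s4"
  have den: "c0 * s1 - c0 * s2 + c0 * s3 + c0 * s4 = c0 * D" unfolding D_def by (simp add: algebra_simps)
  have P: "(sqrt (c0 * s1) * sqrt (c0 * s2) * sqrt (c0 * s3) * sqrt (c0 * s4))^2 = c0^4 * S"
  proof -
    have q: "\<And>x. 0 \<le> x \<Longrightarrow> sqrt (c0 * x)^2 = c0 * x" using assms by simp
    show ?thesis unfolding power_mult_distrib q[OF assms(3)] q[OF assms(4)] q[OF assms(5)] q[OF assms(6)]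
      unfolding S_def by (simp add: algebra_simps eval_nat_numeral)
  qed
  have "(- (- (3 / (4 * \<kappa>\<^sup>2)) * i1 * i2 * i3 * i4 * (sqrt (c0 * s1) * sqrt (c0 * s2) * sqrt (c0 * s3) * sqrt (c0 * s4)))
           / (c0 * s1 - c0 * s2 + c0 * s3 + c0 * s4))^2
       = (3 / (4 * \<kappa>\<^sup>2))^2 * I^2 * (c0^4 * S) / (c0^2 * D^2)"
    unfolding den eqI by (simp add: power_divide power_mult_distrib P[symmetric])
  also have "\<dots> = 9 * c0^2 / (16 * \<kappa>^4) * (S / D^2) * I^2"
    using assms by (simp add: field_simps eval_nat_numeral)
  also have "\<dots> \<le> 9 * c0^2 / (16 * \<kappa>^4) * (S / D^2) * 1"
    using assms II unfolding S_def by (intro mult_left_mono) (auto intro!: divide_nonneg_nonneg mult_nonneg_nonneg)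
  finally show ?thesis unfolding S_def D_def by simp
qed



lemma iota_sq: "(iota N a * iota N b * iota N c * iota N d)^2 \<le> 1"
proof -
  have h: "\<And>x. (iota N x)^2 \<le> 1" unfolding iota_def by (simp add: sgn_if)
  have h0: "\<And>x. 0 \<le> (iota N x)^2" by simp
  have "(iota N a * iota N b * iota N c * iota N d)^2 = (iota N a)^2 * (iota N b)^2 * (iota N c)^2 * (iota N d)^2"
    by (simp add: power_mult_distrib)
  also have "\<dots> \<le> 1 * 1 * 1 * 1"
    by (intro mult_mono h h0 mult_nonneg_nonneg) simp_all
  finally show ?thesis by simp
qed

lemma term_bound:
  fixes \<kappa> m :: real and N :: nat and k1 k2 k3 k4 :: int
  assumes "0 < \<kappa>" "0 < m" "0 < k1" "k1 < int N" "(k2, k3, k4) \<in> sum_range N k1"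
  shows "\<bar>A2 \<kappa> m N k1 k2 k3 k4\<bar>^2 \<le> 9 * (2 * sqrt (\<kappa> / m))^2 / (16 * \<kappa>^4) *
     (9 * (real N)^2 / (real (max (min (nat k3) (N - nat k3)) (min (nat k4) (N - nat k4))))^2)"
proof -
  define c0 where "c0 = 2 * sqrt (\<kappa> / m)"
  have c0p: "0 < c0" using assms unfolding c0_def by simp
  define s where "s = (\<lambda>k::int. \<bar>sin (pi * real_of_int k / real N)\<bar>)"
  have om: "\<And>k. omega \<kappa> m N k = c0 * s k" unfolding omega_def c0_def s_def by simp
  have R: "0 < k2" "k2 < int N" "0 < k3" "k3 < int N" "0 < k4" "k4 < int N" "int N dvd (k1 - k2 + k3 + k4)"
    using assms(5) unfolding sum_range_def by auto
  have Np: "0 < real N" using assms by simp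
  have "\<bar>A2 \<kappa> m N k1 k2 k3 k4\<bar>^2 = (A2 \<kappa> m N k1 k2 k3 k4)^2" by simp
  also have "\<dots> \<le> 9 * c0^2 / (16 * \<kappa>^4) * (s k1 * s k2 * s k3 * s k4 / (s k1 - s k2 + s k3 + s k4)^2)"
    unfolding A2_def Tcoef_def om
    by (rule alg) (use assms c0p iota_sq in \<open>auto simp: s_def\<close>)
  also have "s k1 * s k2 * s k3 * s k4 / (s k1 - s k2 + s k3 + s k4)^2
      \<le> 9 * (real N)^2 / (real (max (min (nat k3) (N - nat k3)) (min (nat k4) (N - nat k4))))^2"
  proof -
    define a where "a = pi * real_of_int k1 / real N"
    define b where "b = pi * real_of_int k3 / real N"
    define c where "c = pi * real_of_int k4 / real N"
    obtain j where j: "k1 - k2 + k3 + k4 = int N * j" using R(7) by blast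
    have "a + b + c = pi * real_of_int k2 / real N + of_int j * pi"
    proof -
      have "real_of_int (k1 + k3 + k4) = real_of_int k2 + real N * of_int j"
        using j by (metis add.commute diff_add_eq of_int_add of_int_mult of_int_of_nat_eq eq_diff_eq add_diff_eq)
      hence "pi * real_of_int (k1 + k3 + k4) / real N = pi * (real_of_int k2 + real N * of_int j) / real N" by simp
      also have "\<dots> = pi * real_of_int k2 / real N + of_int j * pi" using Np by (simp add: field_simps)
      finally show ?thesis unfolding a_def b_def c_def by (simp add: add_divide_distrib distrib_left)
    qed
    hence s2: "s k2 = \<bar>sin (a + b + c)\<bar>" unfolding s_def by (simp add: abs_sin_shift_int)
    define m3 where "m3 = min (nat k3) (N - nat k3)"
    define m4 where "m4 = min (nat k4) (N - nat k4)"
    have m3p: "0 < m3" "0 < m4" unfolding m3_def m4_def using R by auto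
    define L3 where "L3 = 2 * real m3 / (3 * real N)"
    define L4 where "L4 = 2 * real m4 / (3 * real N)"
    have L3: "0 < L3" "L3 \<le> \<bar>sin b\<bar>" unfolding L3_def b_def m3_def
      using m3p Np sin_lower[OF R(3) R(4)] unfolding m3_def by auto
    have L4: "0 < L4" "L4 \<le> \<bar>sin c\<bar>" unfolding L4_def c_def m4_def
      using m3p Np sin_lower[OF R(5) R(6)] unfolding m4_def by auto
    have ss: "s k1 = \<bar>sin a\<bar>" "s k3 = \<bar>sin b\<bar>" "s k4 = \<bar>sin c\<bar>" unfolding s_def a_def b_def c_def by simp_all
    note rb = ratio_both[OF L3 L4, of a]
    have e3: "4 / L3^2 = 9 * (real N)^2 / (real m3)^2" unfolding L3_def using m3p Np
      by (simp add: field_simps power2_eq_square)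
    have e4: "4 / L4^2 = 9 * (real N)^2 / (real m4)^2" unfolding L4_def using m3p Np
      by (simp add: field_simps power2_eq_square)
    show ?thesis unfolding ss s2 m3_def[symmetric] m4_def[symmetric]
      using rb e3 e4 by (cases "m3 \<le> m4") (auto simp: max_def)
  qed
  hence "9 * c0^2 / (16 * \<kappa>^4) * (s k1 * s k2 * s k3 * s k4 / (s k1 - s k2 + s k3 + s k4)^2)
      \<le> 9 * c0^2 / (16 * \<kappa>^4) * (9 * (real N)^2 / (real (max (min (nat k3) (N - nat k3)) (min (nat k4) (N - nat k4))))^2)"
    by (rule mult_left_mono) (use assms in simp)
  finally show ?thesis unfolding c0_def .
qed



theorem mainTheorem3:
  fixes \<kappa> m :: real
  assumes "\<kappa> > 0" and "m > 0"
  shows "\<exists>C > 0. \<forall>(N::nat) (k1::int). N \<ge> 2 \<longrightarrow> 0 < k1 \<longrightarrow> k1 < int N \<longrightarrow>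
           (\<Sum>(k2, k3, k4) \<in> sum_range N k1. \<bar>A2 \<kappa> m N k1 k2 k3 k4\<bar>\<^sup>2)
             \<le> C * real N ^ 2 * ln (real N)"
proof -
  define K where "K = 9 * (2 * sqrt (\<kappa> / m))^2 / (16 * \<kappa>^4)"
  have Kp: "0 < K" unfolding K_def using assms by simp
  define C where "C = K * 72 * (1 + 1 / ln 2)"
  have Cp: "0 < C" unfolding C_def using Kp by (simp add: add_pos_pos)
  show ?thesis
  proof (intro exI[of _ C] conjI allI impI Cp)
    fix N :: nat and k1 :: int
    assume N2: "2 \<le> N" and k1p: "0 < k1" and k1N: "k1 < int N"
    define f where "f = (\<lambda>y z. 1 / (real (max (min y (N - y)) (min z (N - z))))^2)"
    define g where "g = (\<lambda>p. K * (9 * (real N)^2 * f (fst p) (snd p)))"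
    define h where "h = (\<lambda>x::int \<times> int \<times> int. (nat (fst (snd x)), nat (snd (snd x))))"
    define R where "R = sum_range N k1"
    have fnn: "\<And>y z. 0 \<le> f y z" unfolding f_def by simp
    have gnn: "\<And>p. 0 \<le> g p" unfolding g_def using Kp fnn by simp
    have finR: "finite R"
    proof (rule finite_subset)
      show "R \<subseteq> {0..int N} \<times> {0..int N} \<times> {0..int N}" unfolding R_def sum_range_def by auto
    qed simp
    have injh: "inj_on h R"
    proof (rule inj_onI)
      fix x x' assume x: "x \<in> R" and x': "x' \<in> R" and hx: "h x = h x'"
      obtain a b c where xe: "x = (a, b, c)" by (cases x) auto
      obtain a' b' c' where xe': "x' = (a', b', c')" by (cases x') auto
      have r: "0 < a" "a < int N" "0 < b" "0 < c" "int N dvd (k1 - a + b + c)"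
        using x unfolding xe R_def sum_range_def by auto
      have r': "0 < a'" "a' < int N" "0 < b'" "0 < c'" "int N dvd (k1 - a' + b' + c')"
        using x' unfolding xe' R_def sum_range_def by auto
      have bb: "b = b'" "c = c'" using hx r r' unfolding h_def xe xe' by auto
      have "int N dvd (k1 - a + b + c) - (k1 - a' + b' + c')" using r(5) r'(5) by (rule dvd_diff)
      hence d: "int N dvd (a' - a)" using bb by (simp add: algebra_simps)
      have "a' - a = 0"
      proof (rule ccontr)
        assume "a' - a \<noteq> 0"
        hence "\<bar>int N\<bar> \<le> \<bar>a' - a\<bar>" using d by (rule dvd_imp_le_int)
        thus False using r r' by simp
      qed
      thus "x = x'" using bb xe xe' by simp
    qed
    have hR: "h ` R \<subseteq> {1..N-1} \<times> {1..N-1}"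
      unfolding h_def R_def sum_range_def by auto
    have "(\<Sum>(k2, k3, k4) \<in> sum_range N k1. \<bar>A2 \<kappa> m N k1 k2 k3 k4\<bar>\<^sup>2) \<le> (\<Sum>x\<in>R. g (h x))"
      unfolding R_def
    proof (rule sum_mono)
      fix x assume "x \<in> sum_range N k1"
      then obtain a b c where xe: "x = (a, b, c)" and xr: "(a, b, c) \<in> sum_range N k1" by (cases x) auto
      show "(case x of (k2, k3, k4) \<Rightarrow> \<bar>A2 \<kappa> m N k1 k2 k3 k4\<bar>\<^sup>2) \<le> g (h x)"
        unfolding xe using term_bound[OF assms k1p k1N xr]
        by (simp add: g_def h_def f_def K_def)
    qed
    also have "\<dots> = (\<Sum>p\<in>h ` R. g p)" by (rule sum.reindex[OF injh, symmetric, unfolded comp_def])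
    also have "\<dots> \<le> (\<Sum>p\<in>{1..N-1} \<times> {1..N-1}. g p)"
      by (rule sum_mono2) (use hR gnn in auto)
    also have "\<dots> = (\<Sum>y\<in>{1..N-1}. \<Sum>z\<in>{1..N-1}. g (y, z))"
      by (simp add: sum.cartesian_product)
    also have "\<dots> = K * (9 * (real N)^2) * (\<Sum>y\<in>{1..N-1}. \<Sum>z\<in>{1..N-1}. f y z)"
      unfolding g_def by (simp add: sum_distrib_left mult.assoc)
    also have "\<dots> \<le> K * (9 * (real N)^2) * (8 * (1 + ln (real N)))"
      unfolding f_def by (rule mult_left_mono[OF double_fold]) (use N2 Kp in auto)
    also have "\<dots> \<le> C * real N ^ 2 * ln (real N)"
    proof -
      have l2: "0 < ln (2::real)" by simp
      have lN: "ln 2 \<le> ln (real N)" using N2 by simp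
      have "1 \<le> ln (real N) / ln 2" using l2 lN by simp
      hence "1 + ln (real N) \<le> (1 + 1 / ln 2) * ln (real N)" by (simp add: field_simps)
      hence "K * (9 * (real N)^2) * (8 * (1 + ln (real N))) \<le> K * (9 * (real N)^2) * (8 * ((1 + 1 / ln 2) * ln (real N)))"
        using Kp by (intro mult_left_mono) auto
      moreover have "K * (9 * (real N)^2) * (8 * ((1 + 1 / ln 2) * ln (real N))) = C * real N ^ 2 * ln (real N)"
        unfolding C_def by (simp add: algebra_simps)
      ultimately show ?thesis by linarith
    qed
    finally show "(\<Sum>(k2, k3, k4) \<in> sum_range N k1. \<bar>A2 \<kappa> m N k1 k2 k3 k4\<bar>\<^sup>2) \<le> C * real N ^ 2 * ln (real N)" .
  qed
qed


end
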